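(* Let $X$ be a random variable with finite support in $(l,r)$ (with $l,r$ finite), such that $(\theta,1-\theta)\in D_X$ for all $\theta\in(0,1)$. Then $$G_X(\theta,1-\theta)\le[r-\mathbb{E}(X)]^\theta[\mathbb{E}(X)-l]^{1-\theta}\qquad\text{for all }\theta\in(0,1).$$
   Context: For a random variable $X$ with CDF $F$ and survival function $\overline F=1-F$, with $l=\inf\{x:F(x)>0\}$, $r=\sup\{x:\overline F(x)>0\}$, the CIGF is $G_X(\alpha,\beta)=\int_l^r [F(x)]^\alpha[\overline F(x)]^\beta\,dx$ on $D_X=\{(\alpha,\beta)\in\mathbb{R}^2: G_X(\alpha,\beta)<\infty\}$. *)

theory Defs
  imports "HOL-Probability.Probability"
begin

definition cdf_rv :: "'a measure \<Rightarrow> ('a \<Rightarrow> real) \<Rightarrow> real \<Rightarrow> real" where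
  "cdf_rv M X x = measure M {\<omega> \<in> space M. X \<omega> \<le> x}"

definition surv_rv :: "'a measure \<Rightarrow> ('a \<Rightarrow> real) \<Rightarrow> real \<Rightarrow> real" where
  "surv_rv M X x = 1 - cdf_rv M X x"

definition lsupp :: "'a measure \<Rightarrow> ('a \<Rightarrow> real) \<Rightarrow> real" where
  "lsupp M X = Inf {x. cdf_rv M X x > 0}"

definition rsupp :: "'a measure \<Rightarrow> ('a \<Rightarrow> real) \<Rightarrow> real" where
  "rsupp M X = Sup {x. surv_rv M X x > 0}"

text \<open>Integrand of the CIGF; the integral is taken over (l,r) (endpoints are null sets).\<close>
definition cigf_integrand :: "'a measure \<Rightarrow> ('a \<Rightarrow> real) \<Rightarrow> real \<Rightarrow> real \<Rightarrow> real \<Rightarrow> real" where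
  "cigf_integrand M X \<alpha> \<beta> x = cdf_rv M X x powr \<alpha> * surv_rv M X x powr \<beta>"

definition cigf :: "'a measure \<Rightarrow> ('a \<Rightarrow> real) \<Rightarrow> real \<Rightarrow> real \<Rightarrow> real" where
  "cigf M X \<alpha> \<beta> =
     (\<integral>x \<in> {lsupp M X<..<rsupp M X}. cigf_integrand M X \<alpha> \<beta> x \<partial>lborel)"

definition cigf_dom :: "'a measure \<Rightarrow> ('a \<Rightarrow> real) \<Rightarrow> (real \<times> real) set" where
  "cigf_dom M X = {(\<alpha>, \<beta>).
     (\<integral>\<^sup>+ x \<in> {lsupp M X<..<rsupp M X}. ennreal (cigf_integrand M X \<alpha> \<beta> x) \<partial>lborel) < \<infinity>}"

end

theory Submission
  imports Defs
begin


locale cigf_setup = prob_space M for M :: "'a measure" +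
  fixes X :: "'a \<Rightarrow> real"
  assumes Xm[measurable]: "X \<in> borel_measurable M"
    and bb: "bdd_below {x. cdf_rv M X x > 0}"
    and ba: "bdd_above {x. surv_rv M X x > 0}"
begin

abbreviation "D \<equiv> distr M borel X"

lemma D_rd: "real_distribution D" by simp

interpretation D: real_distribution D by (rule D_rd)

lemma F_cdf: "cdf_rv M X x = cdf D x"
proof -
  have "cdf D x = measure M (X -` {..x} \<inter> space M)"
    by (simp add: cdf_def measure_distr)
  also have "X -` {..x} \<inter> space M = {\<omega> \<in> space M. X \<omega> \<le> x}" by auto
  finally show ?thesis by (simp add: cdf_rv_def)
qed

lemma F_mono: "x \<le> y \<Longrightarrow> cdf_rv M X x \<le> cdf_rv M X y"
  by (simp add: F_cdf D.cdf_nondecreasing)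

lemma F_nonneg: "0 \<le> cdf_rv M X x" by (simp add: cdf_rv_def)
lemma F_le1: "cdf_rv M X x \<le> 1" by (simp add: F_cdf D.cdf_bounded_prob)

lemma S_eq: "surv_rv M X x = prob {\<omega> \<in> space M. x < X \<omega>}"
proof -
  have "{\<omega> \<in> space M. x < X \<omega>} = space M - {\<omega> \<in> space M. X \<omega> \<le> x}" by auto
  then show ?thesis unfolding surv_rv_def cdf_rv_def
    by (simp add: prob_compl)
qed

lemma setF_ne: "{x. cdf_rv M X x > 0} \<noteq> {}"
proof -
  have "eventually (\<lambda>x. cdf D x > 1/2) at_top"
    using D.cdf_lim_at_top_prob by (rule order_tendstoD) simp
  then obtain x where "cdf D x > 1/2" by (metis eventually_at_top_linorder order.refl)
  then show ?thesis by (auto simp: F_cdf intro!: exI[of _ x])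
qed

lemma setS_ne: "{x. surv_rv M X x > 0} \<noteq> {}"
proof -
  have "eventually (\<lambda>x. cdf D x < 1/2) at_bot"
    using D.cdf_lim_at_bot by (rule order_tendstoD) simp
  then obtain x where "cdf D x < 1/2" by (metis eventually_at_bot_linorder order.refl)
  then show ?thesis by (auto simp: F_cdf surv_rv_def intro!: exI[of _ x])
qed

lemma F_pos: "lsupp M X < x \<Longrightarrow> cdf_rv M X x > 0"
proof -
  assume "lsupp M X < x"
  then obtain y where "cdf_rv M X y > 0" "y < x"
    using cInf_less_iff[OF setF_ne bb] unfolding lsupp_def by auto
  then show ?thesis using F_mono[of y x] by linarith
qed

lemma S_pos: "x < rsupp M X \<Longrightarrow> surv_rv M X x > 0"
proof -
  assume "x < rsupp M X"
  then obtain y where "surv_rv M X y > 0" "x < y"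
    using less_cSup_iff[OF setS_ne ba] unfolding rsupp_def by auto
  then show ?thesis using F_mono[of x y] unfolding surv_rv_def by linarith
qed

lemma F_zero: "x < lsupp M X \<Longrightarrow> cdf_rv M X x = 0"
proof (rule ccontr)
  assume "x < lsupp M X" "cdf_rv M X x \<noteq> 0"
  then have "cdf_rv M X x > 0" using F_nonneg[of x] by linarith
  then have "lsupp M X \<le> x" unfolding lsupp_def by (intro cInf_lower bb) simp
  with \<open>x < lsupp M X\<close> show False by simp
qed

lemma F_one: "rsupp M X < x \<Longrightarrow> cdf_rv M X x = 1"
proof (rule ccontr)
  assume "rsupp M X < x" "cdf_rv M X x \<noteq> 1"
  then have "surv_rv M X x > 0" using F_le1[of x] unfolding surv_rv_def by linarith
  then have "x \<le> rsupp M X" unfolding rsupp_def by (intro cSup_upper ba) simp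
  with \<open>rsupp M X < x\<close> show False by simp
qed

lemma left_null: "prob {\<omega> \<in> space M. X \<omega> < lsupp M X} = 0"
proof -
  let ?L = "lsupp M X"
  have "(cdf D \<longlongrightarrow> measure D {..<?L}) (at_left ?L)" by (rule D.cdf_at_left)
  moreover have "(cdf D \<longlongrightarrow> 0) (at_left ?L)"
  proof (rule tendsto_eventually)
    show "eventually (\<lambda>x. cdf D x = 0) (at_left ?L)"
      unfolding eventually_at_left_field using F_zero F_cdf
      by (metis lt_ex)
  qed
  ultimately have "measure D {..<?L} = 0" using tendsto_unique[OF trivial_limit_at_left_real] by metis
  moreover have "measure D {..<?L} = prob {\<omega> \<in> space M. X \<omega> < ?L}"
    by (simp add: measure_distr vimage_def Int_def conj_commute)
  ultimately show ?thesis by simp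
qed

lemma right_null: "prob {\<omega> \<in> space M. rsupp M X < X \<omega>} = 0"
proof -
  let ?R = "rsupp M X"
  have "(cdf D \<longlongrightarrow> cdf D ?R) (at_right ?R)"
    using D.cdf_is_right_cont by (simp add: continuous_within)
  moreover have "(cdf D \<longlongrightarrow> 1) (at_right ?R)"
  proof (rule tendsto_eventually)
    show "eventually (\<lambda>x. cdf D x = 1) (at_right ?R)"
      unfolding eventually_at_right_field using F_one F_cdf
      by (metis gt_ex)
  qed
  ultimately have "cdf D ?R = 1" using tendsto_unique[OF trivial_limit_at_right_real] by metis
  then have "surv_rv M X ?R = 0" by (simp add: surv_rv_def F_cdf)
  then show ?thesis by (simp add: S_eq)
qed

lemma AE_bounds: "AE \<omega> in M. lsupp M X \<le> X \<omega> \<and> X \<omega> \<le> rsupp M X"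
proof -
  have "AE \<omega> in M. \<not> X \<omega> < lsupp M X"
    using left_null by (subst AE_iff_measurable[OF _ refl]) (auto simp: emeasure_eq_measure)
  moreover have "AE \<omega> in M. \<not> rsupp M X < X \<omega>"
    using right_null by (subst AE_iff_measurable[OF _ refl]) (auto simp: emeasure_eq_measure)
  ultimately show ?thesis by eventually_elim auto
qed

end


context cigf_setup begin

lemma int_S:
  assumes LR: "lsupp M X < rsupp M X"
  shows "(\<integral>\<^sup>+ x. ennreal (indicator {lsupp M X<..<rsupp M X} x * surv_rv M X x) \<partial>lborel)
         = ennreal (expectation X - lsupp M X)"
proof -
  define L where "L = lsupp M X"
  define R where "R = rsupp M X"
  define f where "f = (\<lambda>\<omega> x. ennreal (if L < x \<and> x < R \<and> x < X \<omega> then 1 else 0))"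
  interpret P: pair_sigma_finite M lborel
    by (simp add: pair_sigma_finite_def sigma_finite_lborel sigma_finite_measure_axioms)
  have fm: "case_prod f \<in> borel_measurable (M \<Otimes>\<^sub>M lborel)"
    unfolding f_def by measurable
  have step1: "ennreal (indicator {L<..<R} x * surv_rv M X x) = (\<integral>\<^sup>+ \<omega>. f \<omega> x \<partial>M)" for x
  proof (cases "L < x \<and> x < R")
    case True
    have "(\<integral>\<^sup>+ \<omega>. f \<omega> x \<partial>M) = (\<integral>\<^sup>+ \<omega>. indicator {\<omega> \<in> space M. x < X \<omega>} \<omega> \<partial>M)"
      using True by (intro nn_integral_cong) (auto simp: f_def indicator_def)
    also have "\<dots> = emeasure M {\<omega> \<in> space M. x < X \<omega>}" by simp
    also have "\<dots> = ennreal (surv_rv M X x)" by (simp add: S_eq emeasure_eq_measure)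
    finally show ?thesis using True by simp
  next
    case False
    then have "(\<lambda>\<omega>. f \<omega> x) = (\<lambda>_. 0)" by (auto simp: f_def fun_eq_iff)
    then show ?thesis using False by (auto simp: indicator_def)
  qed
  have step2: "(\<integral>\<^sup>+ x. f \<omega> x \<partial>lborel) = ennreal (X \<omega> - L)"
    if "L \<le> X \<omega>" "X \<omega> \<le> R" for \<omega>
  proof -
    have "(\<integral>\<^sup>+ x. f \<omega> x \<partial>lborel) = (\<integral>\<^sup>+ x. indicator {L<..<X \<omega>} x \<partial>lborel)"
      using that by (intro nn_integral_cong) (auto simp: f_def indicator_def)
    also have "\<dots> = ennreal (X \<omega> - L)" using that by simp
    finally show ?thesis .
  qed
  have intX: "integrable M X"
  proof (rule integrable_const_bound[where B="\<bar>L\<bar> + \<bar>R\<bar>"])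
    show "AE x in M. norm (X x) \<le> \<bar>L\<bar> + \<bar>R\<bar>"
      using AE_bounds unfolding L_def R_def by eventually_elim auto
  qed simp
  have "(\<integral>\<^sup>+ x. ennreal (indicator {L<..<R} x * surv_rv M X x) \<partial>lborel)
      = (\<integral>\<^sup>+ x. \<integral>\<^sup>+ \<omega>. f \<omega> x \<partial>M \<partial>lborel)"
    by (simp add: step1)
  also have "\<dots> = (\<integral>\<^sup>+ \<omega>. \<integral>\<^sup>+ x. f \<omega> x \<partial>lborel \<partial>M)"
    by (rule P.Fubini'[OF fm])
  also have "\<dots> = (\<integral>\<^sup>+ \<omega>. ennreal (X \<omega> - L) \<partial>M)"
  proof (rule nn_integral_cong_AE)
    show "AE \<omega> in M. (\<integral>\<^sup>+ x. f \<omega> x \<partial>lborel) = ennreal (X \<omega> - L)"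
      using AE_bounds[folded L_def R_def] by eventually_elim (simp add: step2)
  qed
  also have "\<dots> = ennreal (\<integral>\<omega>. (X \<omega> - L) \<partial>M)"
    using AE_bounds unfolding L_def[symmetric] R_def[symmetric]
    by (intro nn_integral_eq_integral) (auto intro!: intX elim!: AE_mp)
  also have "(\<integral>\<omega>. (X \<omega> - L) \<partial>M) = expectation X - L"
    using intX by (simp add: prob_space)
  finally show ?thesis unfolding L_def R_def .
qed

end


context cigf_setup begin

lemma F_meas[measurable]: "cdf_rv M X \<in> borel_measurable lborel"
  using borel_measurable_mono[of "cdf_rv M X"] F_mono by (simp add: mono_def)

lemma S_meas[measurable]: "surv_rv M X \<in> borel_measurable lborel"
  unfolding surv_rv_def[abs_def] by measurable

lemma S_nonneg: "0 \<le> surv_rv M X x" using F_le1[of x] by (simp add: surv_rv_def)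
lemma S_le1: "surv_rv M X x \<le> 1" using F_nonneg[of x] by (simp add: surv_rv_def)

lemma powr_le1': "0 \<le> (a::real) \<Longrightarrow> a \<le> 1 \<Longrightarrow> 0 \<le> t \<Longrightarrow> a powr t \<le> 1"
  by (rule powr_le1) auto

lemma si_bounded:
  fixes h :: "real \<Rightarrow> real"
  assumes "h \<in> borel_measurable lborel" "\<And>x. \<bar>h x\<bar> \<le> 1" "a \<le> b"
  shows "set_integrable lborel {a<..<b} h"
  unfolding set_integrable_def
proof (rule integrableI_bounded_set_indicator[where B=1])
  show "emeasure lborel {a<..<b} < \<infinity>" using assms(3) by simp
  show "AE x in lborel. x \<in> {a<..<b} \<longrightarrow> norm (h x) \<le> 1" using assms(2) by simp
qed (use assms in auto)

lemma main_ineq: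
  assumes th: "0 < \<theta>" "\<theta> < 1"
  shows "cigf M X \<theta> (1 - \<theta>)
             \<le> (rsupp M X - expectation X) powr \<theta>
                * (expectation X - lsupp M X) powr (1 - \<theta>)"
proof (cases "lsupp M X < rsupp M X")
  case False
  then have "{lsupp M X<..<rsupp M X} = {}" by auto
  then have "cigf M X \<theta> (1 - \<theta>) = 0" by (simp add: cigf_def set_lebesgue_integral_def)
  then show ?thesis by simp
next
  case LR: True
  define L where "L = lsupp M X"
  define R where "R = rsupp M X"
  define E where "E = expectation X"
  define F where "F = cdf_rv M X"
  define S where "S = surv_rv M X"
  define I where "I = {L<..<R}"
  have LR': "L < R" using LR by (simp add: L_def R_def)
  have Fm[measurable]: "F \<in> borel_measurable lborel" by (simp add: F_def)
  have Sm[measurable]: "S \<in> borel_measurable lborel" by (simp add: S_def)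
  have FS1: "F x + S x = 1" for x by (simp add: F_def S_def surv_rv_def)
  have F01: "0 \<le> F x" "F x \<le> 1" for x by (simp_all add: F_def F_nonneg F_le1)
  have S01: "0 \<le> S x" "S x \<le> 1" for x by (simp_all add: S_def S_nonneg S_le1)
  have Fpos: "x \<in> I \<Longrightarrow> F x > 0" for x by (simp add: I_def F_def L_def F_pos)
  have Spos: "x \<in> I \<Longrightarrow> S x > 0" for x by (simp add: I_def S_def R_def S_pos)
  have Im[measurable]: "I \<in> sets borel" by (simp add: I_def)
  define g where "g x = F x powr \<theta> * S x powr (1 - \<theta>)" for x
  have gm[measurable]: "g \<in> borel_measurable lborel" unfolding g_def[abs_def] by measurable
  have g01: "\<bar>g x\<bar> \<le> 1" for x
  proof -
    have "F x powr \<theta> \<le> 1" "S x powr (1 - \<theta>) \<le> 1"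
      using F01[of x] S01[of x] th by (auto intro!: powr_le1')
    then show ?thesis unfolding g_def by (simp add: mult_le_one)
  qed
  have siF: "set_integrable lborel I F" unfolding I_def
    by (rule si_bounded) (use F01 LR' in auto)
  have siS: "set_integrable lborel I S" unfolding I_def
    by (rule si_bounded) (use S01 LR' in auto)
  have sig: "set_integrable lborel I g" unfolding I_def
    by (rule si_bounded) (use g01 LR' in auto)
  have measI: "measure lborel I = R - L" using LR' by (simp add: I_def)
  define A where "A = (LINT x:I|lborel. F x)"
  define B where "B = (LINT x:I|lborel. S x)"
  have AB: "A + B = R - L"
  proof -
    have "A + B = (LINT x:I|lborel. F x + S x)"
      using siF siS by (simp add: A_def B_def set_integral_add)
    also have "\<dots> = (LINT x:I|lborel. 1)" by (simp add: FS1)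
    also have "\<dots> = R - L" using measI LR' by (subst set_integral_const) (auto simp: I_def)
    finally show ?thesis .
  qed
  have Bnn: "B = enn2real (\<integral>\<^sup>+ x. ennreal (indicator I x * S x) \<partial>lborel)"
    unfolding B_def set_lebesgue_integral_def
    by (subst integral_eq_nn_integral) (auto simp: S01)
  have BE: "B = max 0 (E - L)"
    using Bnn int_S[OF LR] by (auto simp: I_def L_def R_def S_def E_def max_def ennreal_neg)
  have posI: "(LINT x:I|lborel. h x) > 0"
    if hm: "set_integrable lborel I h" and hp: "\<And>x. x \<in> I \<Longrightarrow> h x > 0"
      and hn: "\<And>x. 0 \<le> h x" for h :: "real \<Rightarrow> real"
  proof -
    have nz: "(LINT x:I|lborel. h x) \<noteq> 0"
    proof
      assume z: "(LINT x:I|lborel. h x) = 0"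
      have "integral\<^sup>L lborel (\<lambda>x. indicator I x *\<^sub>R h x) = 0 \<longleftrightarrow> (AE x in lborel. indicator I x *\<^sub>R h x = 0)"
      proof (rule integral_nonneg_eq_0_iff_AE)
        show "integrable lborel (\<lambda>x. indicator I x *\<^sub>R h x)" using hm by (simp add: set_integrable_def)
        show "AE x in lborel. 0 \<le> indicator I x *\<^sub>R h x" by (intro AE_I2) (simp add: hn)
      qed
      then have "AE x in lborel. indicator I x *\<^sub>R h x = 0"
        using z unfolding set_lebesgue_integral_def by simp
      then have "AE x in lborel. x \<notin> I"
      proof (rule eventually_mono)
        fix x assume "indicator I x *\<^sub>R h x = 0"
        then show "x \<notin> I" using hp[of x] by (cases "x \<in> I") auto
      qed
      then have "emeasure lborel I = 0"
        by (subst (asm) AE_iff_measurable[OF _ refl]) (auto simp: I_def greaterThanLessThan_def greaterThan_def lessThan_def Collect_conj_eq[symmetric])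
      then show False using LR' by (simp add: I_def)
    qed
    moreover have "(LINT x:I|lborel. h x) \<ge> 0"
      unfolding set_lebesgue_integral_def by (rule Bochner_Integration.integral_nonneg) (simp add: hn)
    ultimately show ?thesis by simp
  qed
  have Apos: "A > 0" unfolding A_def by (rule posI[OF siF Fpos F01(1)])
  have Bpos: "B > 0" unfolding B_def by (rule posI[OF siS Spos S01(1)])
  have BE': "B = E - L" using BE Bpos by (simp add: max_def split: if_splits)
  have AE': "A = R - E" using AB BE' by simp
  define c where "c = A powr \<theta> * B powr (1 - \<theta>)"
  have pt: "g x \<le> c * (\<theta> / A * F x + (1 - \<theta>) / B * S x)" if "x \<in> I" for x
  proof -
    have "(F x / A) powr \<theta> * (S x / B) powr (1 - \<theta>) \<le> \<theta> * (F x / A) + (1 - \<theta>) * (S x / B)"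
      using th Apos Bpos Fpos[OF that] Spos[OF that] by (intro Youngs_inequality_0) auto
    moreover have "(F x / A) powr \<theta> * (S x / B) powr (1 - \<theta>) = g x / c"
      using Apos Bpos F01[of x] S01[of x]
      by (simp add: g_def c_def powr_divide)
    moreover have "c > 0" using Apos Bpos by (simp add: c_def)
    ultimately show ?thesis by (simp add: field_simps)
  qed
  have "cigf M X \<theta> (1 - \<theta>) = (LINT x:I|lborel. g x)"
    by (simp add: cigf_def cigf_integrand_def g_def I_def L_def R_def F_def S_def)
  also have "\<dots> \<le> (LINT x:I|lborel. c * (\<theta> / A * F x + (1 - \<theta>) / B * S x))"
  proof (rule set_integral_mono[OF sig _ pt])
    have "set_integrable lborel I (\<lambda>x. \<theta> / A * F x)" using siF by (rule set_integrable_mult_right)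
    moreover have "set_integrable lborel I (\<lambda>x. (1 - \<theta>) / B * S x)" using siS by (rule set_integrable_mult_right)
    ultimately have "set_integrable lborel I (\<lambda>x. \<theta> / A * F x + (1 - \<theta>) / B * S x)"
      by (rule set_integral_add(1))
    then show "set_integrable lborel I (\<lambda>x. c * (\<theta> / A * F x + (1 - \<theta>) / B * S x))"
      by (rule set_integrable_mult_right)
  qed
  also have "\<dots> = c * (\<theta> / A * A + (1 - \<theta>) / B * B)"
    using siF siS by (simp add: set_integral_add set_integrable_mult_right A_def B_def)
  also have "\<dots> = c" using Apos Bpos by simp
  also have "c = (R - E) powr \<theta> * (E - L) powr (1 - \<theta>)" by (simp add: c_def AE' BE')
  finally show ?thesis by (simp add: R_def E_def L_def)
qed

end

theorem proposition7:
  fixes M :: "'a measure" and X :: "'a \<Rightarrow> real"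
  assumes "prob_space M"
    and "X \<in> borel_measurable M"
    and "bdd_below {x. cdf_rv M X x > 0}"
    and "bdd_above {x. surv_rv M X x > 0}"
    and "\<forall>\<theta>::real. 0 < \<theta> \<and> \<theta> < 1 \<longrightarrow> (\<theta>, 1 - \<theta>) \<in> cigf_dom M X"
  shows "\<forall>\<theta>::real. 0 < \<theta> \<and> \<theta> < 1 \<longrightarrow>
           cigf M X \<theta> (1 - \<theta>)
             \<le> (rsupp M X - prob_space.expectation M X) powr \<theta>
                * (prob_space.expectation M X - lsupp M X) powr (1 - \<theta>)"
proof -
  interpret cigf_setup M X
    using assms(1-4) by (simp add: cigf_setup_def cigf_setup_axioms_def)
  show ?thesis using main_ineq by blast
qed

end
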